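(* Let $k\in\mathbb C\setminus\mathbb Q$, $n,m\in\mathbb Z_{>0}$, $p_0=n+k^{-1}m$. Let $\alpha\in\mathcal P_{n,m}$ and let $E$ be its $\mathcal E$-equivalence class. Then: 1) $E\subset\mathcal P_{n,m}$. 2) $E$ contains a minimal bipartition $\alpha_m$ and a maximal bipartition $\alpha_M$ such that $\alpha_m\subset\beta\subset\alpha_M$ for every $\beta\in E$. They are characterised within $E$ by the properties $\lambda\cap\theta(\mu)=\emptyset$ (for $\alpha_m=(\lambda,\mu)$) and $\lambda\cup\theta(\mu)=\pi(n,m)$ (for $\alpha_M=(\lambda,\mu)$), respectively. 3) Write $\alpha_m=(\lambda_m,\mu_m)$, $\alpha_M=(\lambda_M,\mu_M)$ and let $\lambda_M\setminus\lambda_m=\nu_1\cup\dots\cup\nu_r$ and $\mu_M\setminus\mu_m=\tau_1\cup\dots\cup\tau_s$ be the decompositions of these skew diagrams into connected components. Then all $\nu_i,\tau_j\subset\pi(n,m)$, $r=s$, and after a reordering $\theta(\nu_i)=\tau_i$ for $i=1,\dots,r$. 4) Every element $\beta\in E$ can be written uniquely in the form $\beta=\alpha_m\cup(\nu_{a_1},\tau_{a_1})\cup\dots\cup(\nu_{a_l},\tau_{a_l})$ with $\{a_1,\dots,a_l\}\subset\{1,\dots,r\}$; conversely every set of this form is a bipartition belonging to $E$. In particular $E$ has exactly $2^r$ elements.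
   Context: Partitions are identified with Young diagrams, i.e. finite sets of boxes $(i,j)\in\mathbb Z_{>0}^2$ ($i$ = row, $j$ = column) closed under moving up or left; a bipartition is a pair $(\lambda,\mu)$ of partitions, with inclusion and set operations (union, intersection, difference) taken componentwise. Connected components of a set of boxes are taken with respect to boxes sharing an edge. For a box $x=(i,j)$, $c(x,a)=(j-1)+k(i-1)+a$, and $b_r(\alpha,k,p_0)=\sum_{x\in\lambda}c(x,0)^{r-1}+(-1)^r\sum_{y\in\mu}c(y,1+k-kp_0)^{r-1}$ for $r\ge1$. Bipartitions are $\mathcal E$-equivalent if all their $b_r$, $r\ge1$, coincide. $\pi(n,m)=\{(i,j):1\le i\le n,1\le j\le m\}$, $\theta(i,j)=(n-i+1,m-j+1)$ on $\pi(n,m)$, and $\mathcal P_{n,m}$ is the set of bipartitions $(\lambda,\mu)$ with $\lambda,\mu\subset\pi(n,m)$. *)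

theory Defs
  imports Complex_Main
begin

type_synonym box = "nat \<times> nat"
type_synonym bipart = "box set \<times> box set"

text \<open>Young diagrams: finite sets of boxes (i,j) with i,j > 0 (i = row, j = column),
closed under moving up or left.\<close>
definition is_partition :: "box set \<Rightarrow> bool" where
  "is_partition L \<longleftrightarrow> finite L \<and> (\<forall>(i,j)\<in>L. i \<ge> 1 \<and> j \<ge> 1) \<and>
     (\<forall>(i,j)\<in>L. (i > 1 \<longrightarrow> (i - 1, j) \<in> L) \<and> (j > 1 \<longrightarrow> (i, j - 1) \<in> L))"

definition is_bipartition :: "bipart \<Rightarrow> bool" where
  "is_bipartition a \<longleftrightarrow> is_partition (fst a) \<and> is_partition (snd a)"

definition bip_le :: "bipart \<Rightarrow> bipart \<Rightarrow> bool" where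
  "bip_le a b \<longleftrightarrow> fst a \<subseteq> fst b \<and> snd a \<subseteq> snd b"

definition bip_union :: "bipart \<Rightarrow> bipart \<Rightarrow> bipart" where
  "bip_union a b = (fst a \<union> fst b, snd a \<union> snd b)"

definition cont :: "complex \<Rightarrow> box \<Rightarrow> complex \<Rightarrow> complex" where
  "cont k x a = of_nat (snd x - 1) + k * of_nat (fst x - 1) + a"

definition bval :: "nat \<Rightarrow> bipart \<Rightarrow> complex \<Rightarrow> complex \<Rightarrow> complex" where
  "bval r a k p0 = (\<Sum>x\<in>fst a. cont k x 0 ^ (r - 1))
      + (-1) ^ r * (\<Sum>y\<in>snd a. cont k y (1 + k - k * p0) ^ (r - 1))"

definition E_equiv :: "complex \<Rightarrow> complex \<Rightarrow> bipart \<Rightarrow> bipart \<Rightarrow> bool" where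
  "E_equiv k p0 a b \<longleftrightarrow> (\<forall>r\<ge>1. bval r a k p0 = bval r b k p0)"

definition E_class :: "complex \<Rightarrow> complex \<Rightarrow> bipart \<Rightarrow> bipart set" where
  "E_class k p0 a = {b. is_bipartition b \<and> E_equiv k p0 a b}"

definition rect :: "nat \<Rightarrow> nat \<Rightarrow> box set" where
  "rect n m = {(i,j). 1 \<le> i \<and> i \<le> n \<and> 1 \<le> j \<and> j \<le> m}"

definition theta :: "nat \<Rightarrow> nat \<Rightarrow> box \<Rightarrow> box" where
  "theta n m x = (n - fst x + 1, m - snd x + 1)"

definition P_nm :: "nat \<Rightarrow> nat \<Rightarrow> bipart set" where
  "P_nm n m = {a. is_bipartition a \<and> fst a \<subseteq> rect n m \<and> snd a \<subseteq> rect n m}"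

definition box_adj :: "box \<Rightarrow> box \<Rightarrow> bool" where
  "box_adj x y \<longleftrightarrow>
     (fst x = fst y \<and> (snd x = snd y + 1 \<or> snd y = snd x + 1)) \<or>
     (snd x = snd y \<and> (fst x = fst y + 1 \<or> fst y = fst x + 1))"

definition connected_in :: "box set \<Rightarrow> box \<Rightarrow> box \<Rightarrow> bool" where
  "connected_in S = (\<lambda>x y. x \<in> S \<and> y \<in> S \<and> box_adj x y)\<^sup>*\<^sup>*"

definition components :: "box set \<Rightarrow> box set set" where
  "components S = {{y \<in> S. connected_in S x y} | x. x \<in> S}"

end

theory Submission
  imports Defs "HOL-Computational_Algebra.Polynomial"
begin

lemma power_sum_zero:
  fixes F :: "complex set" and w :: "complex \<Rightarrow> complex"
  assumes fin: "finite F" and h: "\<And>s. (\<Sum>z\<in>F. w z * z ^ s) = 0" and z0: "z0 \<in> F"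
  shows "w z0 = 0"
proof -
  define p where "p = (\<Prod>j\<in>F - {z0}. [:-j, 1:])"
  have pv: "poly p x = (\<Prod>j\<in>F - {z0}. x - j)" for x
    by (simp add: p_def poly_prod)
  have "(\<Sum>z\<in>F. w z * poly p z) = (\<Sum>z\<in>F. \<Sum>i\<le>degree p. coeff p i * (w z * z ^ i))"
    by (simp add: poly_altdef sum_distrib_left mult_ac)
  also have "\<dots> = (\<Sum>i\<le>degree p. coeff p i * (\<Sum>z\<in>F. w z * z ^ i))"
    by (subst sum.swap) (simp add: sum_distrib_left)
  also have "\<dots> = 0" using h by simp
  finally have 1: "(\<Sum>z\<in>F. w z * poly p z) = 0" .
  have "(\<Sum>z\<in>F. w z * poly p z) = w z0 * poly p z0 + (\<Sum>z\<in>F - {z0}. w z * poly p z)"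
    using fin z0 by (simp add: sum.remove)
  also have "(\<Sum>z\<in>F - {z0}. w z * poly p z) = 0"
    using fin by (intro sum.neutral) (auto simp: pv prod_zero_iff)
  finally have "w z0 * poly p z0 = 0" using 1 by simp
  moreover have "poly p z0 \<noteq> 0" using fin by (simp add: pv prod_zero_iff)
  ultimately show ?thesis by simp
qed

definition c0 :: "complex \<Rightarrow> box \<Rightarrow> complex" where "c0 k x = cont k x 0"
definition d1 :: "complex \<Rightarrow> complex \<Rightarrow> box \<Rightarrow> complex" where
  "d1 k p0 y = - cont k y (1 + k - k * p0)"
definition wt :: "complex \<Rightarrow> complex \<Rightarrow> bipart \<Rightarrow> complex \<Rightarrow> int" where
  "wt k p0 a z = of_bool (z \<in> c0 k ` fst a) - of_bool (z \<in> d1 k p0 ` snd a)"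

lemma sgn_aux: "(-1::complex) ^ Suc s * (- d) ^ s = - (d ^ s)"
proof -
  have "(-1::complex) ^ Suc s * (- d) ^ s = - ((-1) ^ s * (- d) ^ s)" by simp
  also have "(-1::complex) ^ s * (- d) ^ s = ((-1) * (- d)) ^ s" by (rule power_mult_distrib[symmetric])
  finally show ?thesis by simp
qed

lemma bval_alt:
  "bval (Suc s) a k p0 = (\<Sum>x\<in>fst a. c0 k x ^ s) - (\<Sum>y\<in>snd a. d1 k p0 y ^ s)"
proof -
  have "(-1) ^ Suc s * cont k y (1 + k - k * p0) ^ s = - (d1 k p0 y ^ s)" for y
    using sgn_aux[of s "d1 k p0 y"] by (simp add: d1_def)
  then show ?thesis
    by (simp add: bval_def c0_def sum_distrib_left sum_negf del: power_Suc)
qed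

lemma sum_ind:
  fixes g :: "complex \<Rightarrow> complex"
  assumes "finite F" "A \<subseteq> F"
  shows "(\<Sum>z\<in>F. of_bool (z \<in> A) * g z) = sum g A"
proof -
  have "(\<Sum>z\<in>F. of_bool (z \<in> A) * g z) = (\<Sum>z\<in>F. if z \<in> A then g z else 0)"
    by (rule sum.cong) auto
  also have "\<dots> = sum g {z\<in>F. z \<in> A}" by (simp add: sum.inter_filter assms)
  also have "{z\<in>F. z \<in> A} = A" using assms by auto
  finally show ?thesis .
qed

lemma bval_wt:
  assumes "finite F" "c0 k ` fst a \<subseteq> F" "d1 k p0 ` snd a \<subseteq> F"
    "inj_on (c0 k) (fst a)" "inj_on (d1 k p0) (snd a)"
  shows "bval (Suc s) a k p0 = (\<Sum>z\<in>F. of_int (wt k p0 a z) * z ^ s)"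
proof -
  have "(\<Sum>x\<in>fst a. c0 k x ^ s) = (\<Sum>z\<in>c0 k ` fst a. z ^ s)"
    using assms(4) by (simp add: sum.reindex)
  also have "\<dots> = (\<Sum>z\<in>F. of_bool (z \<in> c0 k ` fst a) * z ^ s)"
    using assms by (intro sum_ind[symmetric]) auto
  finally have 1: "(\<Sum>x\<in>fst a. c0 k x ^ s) = \<dots>" .
  have "(\<Sum>x\<in>snd a. d1 k p0 x ^ s) = (\<Sum>z\<in>d1 k p0 ` snd a. z ^ s)"
    using assms(5) by (simp add: sum.reindex)
  also have "\<dots> = (\<Sum>z\<in>F. of_bool (z \<in> d1 k p0 ` snd a) * z ^ s)"
    using assms by (intro sum_ind[symmetric]) auto
  finally have 2: "(\<Sum>x\<in>snd a. d1 k p0 x ^ s) = \<dots>" .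
  have "of_int (wt k p0 a z) * z ^ s = of_bool (z \<in> c0 k ` fst a) * z ^ s - of_bool (z \<in> d1 k p0 ` snd a) * z ^ s" for z
    by (simp add: wt_def left_diff_distrib)
  then show ?thesis by (simp only: bval_alt 1 2 sum_subtractf)
qed

lemma K:
  assumes "finite (fst a)" "finite (snd a)" "finite (fst b)" "finite (snd b)"
    "inj_on (c0 k) (fst a)" "inj_on (d1 k p0) (snd a)"
    "inj_on (c0 k) (fst b)" "inj_on (d1 k p0) (snd b)"
  shows "E_equiv k p0 a b \<longleftrightarrow> (\<forall>z. wt k p0 a z = wt k p0 b z)"
proof -
  define F where "F = c0 k ` fst a \<union> d1 k p0 ` snd a \<union> c0 k ` fst b \<union> d1 k p0 ` snd b"
  have fF: "finite F" using assms by (simp add: F_def)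
  have ba: "bval (Suc s) a k p0 = (\<Sum>z\<in>F. of_int (wt k p0 a z) * z ^ s)" for s
    using assms fF by (intro bval_wt) (auto simp: F_def)
  have bb: "bval (Suc s) b k p0 = (\<Sum>z\<in>F. of_int (wt k p0 b z) * z ^ s)" for s
    using assms fF by (intro bval_wt) (auto simp: F_def)
  have eq: "E_equiv k p0 a b \<longleftrightarrow> (\<forall>s. bval (Suc s) a k p0 = bval (Suc s) b k p0)"
    unfolding E_equiv_def
  proof safe
    fix s assume "\<forall>r\<ge>1. bval r a k p0 = bval r b k p0"
    then show "bval (Suc s) a k p0 = bval (Suc s) b k p0" by simp
  next
    fix r :: nat assume h: "\<forall>s. bval (Suc s) a k p0 = bval (Suc s) b k p0" "1 \<le> r"
    then obtain s where "r = Suc s" by (cases r) auto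
    then show "bval r a k p0 = bval r b k p0" using h by simp
  qed
  show ?thesis
  proof
    assume "E_equiv k p0 a b"
    then have "(\<Sum>z\<in>F. of_int (wt k p0 a z - wt k p0 b z) * z ^ s) = 0" for s
    proof -
      have "bval (Suc s) a k p0 - bval (Suc s) b k p0 = 0" using eq `E_equiv k p0 a b` by simp
      then show ?thesis unfolding ba bb sum_subtractf[symmetric] by (simp add: left_diff_distrib)
    qed
    then have "z \<in> F \<Longrightarrow> (of_int (wt k p0 a z - wt k p0 b z) :: complex) = 0" for z
      using power_sum_zero[OF fF, of "\<lambda>z. of_int (wt k p0 a z - wt k p0 b z)"] by blast
    moreover have "z \<notin> F \<Longrightarrow> wt k p0 a z = 0 \<and> wt k p0 b z = 0" for z
      by (auto simp: wt_def F_def)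
    ultimately show "\<forall>z. wt k p0 a z = wt k p0 b z" by (metis eq_iff_diff_eq_0 of_int_eq_0_iff)
  next
    assume "\<forall>z. wt k p0 a z = wt k p0 b z"
    then show "E_equiv k p0 a b" using eq ba bb by simp
  qed
qed

definition pos :: "box \<Rightarrow> bool" where "pos x \<longleftrightarrow> fst x \<ge> 1 \<and> snd x \<ge> 1"

lemma k_nz: "k \<notin> \<rat> \<Longrightarrow> k \<noteq> 0" by auto

lemma phi_inj:
  assumes "k \<notin> \<rat>" "of_int a + k * of_int b = of_int a' + k * (of_int b' :: complex)"
  shows "a = a' \<and> b = b'"
proof (cases "b = b'")
  case True then show ?thesis using assms by simp
next
  case False
  then have "k * of_int (b - b') = of_int (a' - a)" using assms(2) by (simp add: algebra_simps)
  then have "k = of_int (a' - a) / of_int (b - b')" using False by (simp add: field_simps)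
  then have "k \<in> \<rat>" by simp
  then show ?thesis using assms(1) by simp
qed

lemma c0_expl: "pos x \<Longrightarrow> c0 k x = of_int (int (snd x) - 1) + k * of_int (int (fst x) - 1)"
  by (simp add: c0_def cont_def pos_def of_nat_diff)

lemma d1_expl:
  assumes "k \<noteq> 0" "pos y" "p0 = of_nat n + of_nat m / k"
  shows "d1 k p0 y = of_int (int m - int (snd y)) + k * of_int (int n - int (fst y))"
proof -
  have "k * p0 = k * of_nat n + of_nat m" using assms by (simp add: field_simps)
  then show ?thesis using assms(2) by (simp add: d1_def cont_def pos_def of_nat_diff algebra_simps)
qed

lemma c0_inj: assumes "k \<notin> \<rat>" "pos x" "pos x'" "c0 k x = c0 k x'" shows "x = x'"
proof -
  have "of_int (int (snd x) - 1) + k * of_int (int (fst x) - 1) = of_int (int (snd x') - 1) + k * (of_int (int (fst x') - 1) :: complex)"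
    using assms c0_expl by metis
  from phi_inj[OF assms(1) this] show ?thesis by (simp add: prod_eq_iff)
qed

lemma d1_inj: assumes "k \<notin> \<rat>" "p0 = of_nat n + of_nat m / k" "pos x" "pos x'" "d1 k p0 x = d1 k p0 x'" shows "x = x'"
proof -
  have "of_int (int m - int (snd x)) + k * of_int (int n - int (fst x)) = of_int (int m - int (snd x')) + k * (of_int (int n - int (fst x')) :: complex)"
    using assms d1_expl k_nz by metis
  from phi_inj[OF assms(1) this] show ?thesis by (simp add: prod_eq_iff)
qed

lemma c0_d1: assumes "k \<notin> \<rat>" "p0 = of_nat n + of_nat m / k" "pos x" "pos y" "c0 k x = d1 k p0 y"
  shows "int (fst x) - 1 = int n - int (fst y) \<and> int (snd x) - 1 = int m - int (snd y)"
proof -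
  have "of_int (int (snd x) - 1) + k * of_int (int (fst x) - 1) = of_int (int m - int (snd y)) + k * (of_int (int n - int (fst y)) :: complex)"
    using assms d1_expl c0_expl k_nz by metis
  from phi_inj[OF assms(1) this] show ?thesis by simp
qed

lemma part_pos: "is_partition L \<Longrightarrow> x \<in> L \<Longrightarrow> pos x"
  by (auto simp: is_partition_def pos_def)

lemma rect_pos: "x \<in> rect n m \<Longrightarrow> pos x"
  by (auto simp: rect_def pos_def)

lemma theta_rect: "x \<in> rect n m \<Longrightarrow> theta n m x \<in> rect n m"
  by (auto simp: rect_def theta_def)

lemma theta_theta: "x \<in> rect n m \<Longrightarrow> theta n m (theta n m x) = x"
  by (auto simp: rect_def theta_def)

lemma d1_theta: "d1 k p0 y = c0 k (theta n m y)" if "k \<notin> \<rat>" "p0 = of_nat n + of_nat m / k" "y \<in> rect n m"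
proof -
  have "d1 k p0 y = of_int (int m - int (snd y)) + k * of_int (int n - int (fst y))"
    using d1_expl[of k y p0 n m] k_nz[of k] rect_pos[of y n m] that by simp
  also have "\<dots> = of_int (int (snd (theta n m y)) - 1) + k * of_int (int (fst (theta n m y)) - 1)"
    using that(3) by (auto simp: theta_def rect_def of_nat_diff)
  also have "\<dots> = c0 k (theta n m y)" using c0_expl[of "theta n m y" k] rect_pos theta_rect that(3) by metis
  finally show ?thesis .
qed

definition Beq :: "nat \<Rightarrow> nat \<Rightarrow> bipart \<Rightarrow> bipart \<Rightarrow> bool" where
  "Beq n m a b \<longleftrightarrow> fst a - theta n m ` snd a = fst b - theta n m ` snd b \<and>
     theta n m ` snd a - fst a = theta n m ` snd b - fst b"

lemma ob_iff: "((of_bool P - of_bool Q :: int) = of_bool P' - of_bool Q') \<longleftrightarrow>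
   ((P \<and> \<not> Q) = (P' \<and> \<not> Q') \<and> (Q \<and> \<not> P) = (Q' \<and> \<not> P'))"
  by (cases P; cases Q; cases P'; cases Q') auto

lemma wt_generic:
  assumes inj: "inj_on f R" and sub: "La \<subseteq> R" "Ta \<subseteq> R" "Lb \<subseteq> R" "Tb \<subseteq> R"
  shows "(\<forall>z. (of_bool (z \<in> f ` La) - of_bool (z \<in> f ` Ta) :: int) = of_bool (z \<in> f ` Lb) - of_bool (z \<in> f ` Tb))
     \<longleftrightarrow> (La - Ta = Lb - Tb \<and> Ta - La = Tb - Lb)"
proof -
  have mem: "x \<in> R \<Longrightarrow> X \<subseteq> R \<Longrightarrow> (f x \<in> f ` X) = (x \<in> X)" for x X
    using inj by (meson inj_on_image_mem_iff)
  show ?thesis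
  proof
    assume h: "\<forall>z. (of_bool (z \<in> f ` La) - of_bool (z \<in> f ` Ta) :: int) = of_bool (z \<in> f ` Lb) - of_bool (z \<in> f ` Tb)"
    have "x \<in> R \<Longrightarrow> (x \<in> La \<and> x \<notin> Ta) = (x \<in> Lb \<and> x \<notin> Tb) \<and> (x \<in> Ta \<and> x \<notin> La) = (x \<in> Tb \<and> x \<notin> Lb)" for x
      using h[rule_format, of "f x"] mem[of x] sub unfolding ob_iff by simp
    then show "La - Ta = Lb - Tb \<and> Ta - La = Tb - Lb" using sub by blast
  next
    assume h: "La - Ta = Lb - Tb \<and> Ta - La = Tb - Lb"
    show "\<forall>z. (of_bool (z \<in> f ` La) - of_bool (z \<in> f ` Ta) :: int) = of_bool (z \<in> f ` Lb) - of_bool (z \<in> f ` Tb)"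
    proof
      fix z
      show "(of_bool (z \<in> f ` La) - of_bool (z \<in> f ` Ta) :: int) = of_bool (z \<in> f ` Lb) - of_bool (z \<in> f ` Tb)"
      proof (cases "z \<in> f ` R")
        case True
        then obtain x where x: "x \<in> R" "z = f x" by auto
        have "(x \<in> La \<and> x \<notin> Ta) = (x \<in> Lb \<and> x \<notin> Tb) \<and> (x \<in> Ta \<and> x \<notin> La) = (x \<in> Tb \<and> x \<notin> Lb)"
          using h by blast
        then show ?thesis unfolding ob_iff x(2) using mem[OF x(1)] sub by simp
      next
        case False
        then show ?thesis using sub by auto
      qed
    qed
  qed
qed

lemma c0_inj_on: "k \<notin> \<rat> \<Longrightarrow> (\<And>x. x \<in> S \<Longrightarrow> pos x) \<Longrightarrow> inj_on (c0 k) S"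
  by (meson c0_inj inj_onI)

lemma d1_inj_on: "k \<notin> \<rat> \<Longrightarrow> p0 = of_nat n + of_nat m / k \<Longrightarrow> (\<And>x. x \<in> S \<Longrightarrow> pos x) \<Longrightarrow> inj_on (d1 k p0) S"
  by (meson d1_inj inj_onI)

lemma K2:
  assumes hk: "k \<notin> \<rat>" and p0: "p0 = of_nat n + of_nat m / k"
    and a: "is_bipartition a" and b: "is_bipartition b"
  shows "E_equiv k p0 a b \<longleftrightarrow> (\<forall>z. wt k p0 a z = wt k p0 b z)"
proof -
  have pa: "is_partition (fst a)" "is_partition (snd a)" "is_partition (fst b)" "is_partition (snd b)"
    using a b by (auto simp: is_bipartition_def)
  have f: "finite (fst a)" "finite (snd a)" "finite (fst b)" "finite (snd b)"
    using pa by (auto simp: is_partition_def)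
  have i1: "inj_on (c0 k) (fst a)" by (rule c0_inj_on[OF hk]) (rule part_pos[OF pa(1)])
  have i2: "inj_on (c0 k) (fst b)" by (rule c0_inj_on[OF hk]) (rule part_pos[OF pa(3)])
  have i3: "inj_on (d1 k p0) (snd a)" by (rule d1_inj_on[OF hk p0]) (rule part_pos[OF pa(2)])
  have i4: "inj_on (d1 k p0) (snd b)" by (rule d1_inj_on[OF hk p0]) (rule part_pos[OF pa(4)])
  show ?thesis by (rule K[OF f i1 i3 i2 i4])
qed

lemma step1:
  assumes hk: "k \<notin> \<rat>" and p0: "p0 = of_nat n + of_nat m / k"
    and a: "a \<in> P_nm n m" and b: "is_bipartition b" and e: "E_equiv k p0 a b"
  shows "b \<in> P_nm n m"
proof -
  have ab: "is_bipartition a" using a by (simp add: P_nm_def)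
  have pa: "is_partition (fst a)" "is_partition (snd a)" "is_partition (fst b)" "is_partition (snd b)"
    using ab b by (auto simp: is_bipartition_def)
  have w: "wt k p0 a z = wt k p0 b z" for z using K2[OF hk p0 ab b] e by blast
  have ar: "fst a \<subseteq> rect n m" "snd a \<subseteq> rect n m" using a by (auto simp: P_nm_def)
  have 1: "x \<in> rect n m" if x: "x \<in> fst b" for x
  proof (cases "c0 k x \<in> c0 k ` fst a")
    case True
    then obtain x' where "x' \<in> fst a" "c0 k x = c0 k x'" by auto
    then have "x = x'" using c0_inj[OF hk part_pos[OF pa(3) x] part_pos[OF pa(1)]] by auto
    then show ?thesis using \<open>x' \<in> fst a\<close> ar by auto
  next
    case False
    have "c0 k x \<in> d1 k p0 ` snd b"
    proof (rule ccontr)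
      assume "c0 k x \<notin> d1 k p0 ` snd b"
      then have "wt k p0 b (c0 k x) = 1" using x by (simp add: wt_def)
      moreover have "wt k p0 a (c0 k x) \<le> 0" using False by (simp add: wt_def)
      ultimately show False using w by simp
    qed
    then obtain y where y: "y \<in> snd b" "c0 k x = d1 k p0 y" by auto
    have "int (fst x) - 1 = int n - int (fst y) \<and> int (snd x) - 1 = int m - int (snd y)"
      using c0_d1[OF hk p0 part_pos[OF pa(3) x] part_pos[OF pa(4) y(1)] y(2)] .
    moreover have "pos y" "pos x" using part_pos[OF pa(4) y(1)] part_pos[OF pa(3) x] .
    ultimately show ?thesis by (auto simp: rect_def pos_def)
  qed
  have 2: "y \<in> rect n m" if y: "y \<in> snd b" for y
  proof (cases "d1 k p0 y \<in> d1 k p0 ` snd a")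
    case True
    then obtain y' where "y' \<in> snd a" "d1 k p0 y = d1 k p0 y'" by auto
    then have "y = y'" using d1_inj[OF hk p0 part_pos[OF pa(4) y] part_pos[OF pa(2)]] by auto
    then show ?thesis using \<open>y' \<in> snd a\<close> ar by auto
  next
    case False
    have "d1 k p0 y \<in> c0 k ` fst b"
    proof (rule ccontr)
      assume "d1 k p0 y \<notin> c0 k ` fst b"
      then have "wt k p0 b (d1 k p0 y) = -1" using y by (simp add: wt_def)
      moreover have "wt k p0 a (d1 k p0 y) \<ge> 0" using False by (simp add: wt_def)
      ultimately show False using w by simp
    qed
    then obtain x where x: "x \<in> fst b" "c0 k x = d1 k p0 y" by auto
    have "int (fst x) - 1 = int n - int (fst y) \<and> int (snd x) - 1 = int m - int (snd y)"
      using c0_d1[OF hk p0 part_pos[OF pa(3) x(1)] part_pos[OF pa(4) y] x(2)] .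
    moreover have "pos y" "pos x" using part_pos[OF pa(4) y] part_pos[OF pa(3) x(1)] .
    ultimately show ?thesis by (auto simp: rect_def pos_def)
  qed
  show ?thesis using 1 2 b by (auto simp: P_nm_def)
qed

lemma img_d1:
  assumes hk: "k \<notin> \<rat>" and p0: "p0 = of_nat n + of_nat m / k" and "S \<subseteq> rect n m"
  shows "d1 k p0 ` S = c0 k ` (theta n m ` S)"
  using d1_theta[OF hk p0] assms(3) by (auto simp: image_image intro!: image_cong)

lemma theta_sub: "S \<subseteq> rect n m \<Longrightarrow> theta n m ` S \<subseteq> rect n m"
  using theta_rect by auto

lemma Box:
  assumes hk: "k \<notin> \<rat>" and p0: "p0 = of_nat n + of_nat m / k"
    and a: "a \<in> P_nm n m" and b: "b \<in> P_nm n m"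
  shows "E_equiv k p0 a b \<longleftrightarrow> Beq n m a b"
proof -
  have ab: "is_bipartition a" "is_bipartition b" "fst a \<subseteq> rect n m" "snd a \<subseteq> rect n m"
     "fst b \<subseteq> rect n m" "snd b \<subseteq> rect n m" using a b by (auto simp: P_nm_def)
  have inj: "inj_on (c0 k) (rect n m)" using c0_inj_on[OF hk] rect_pos by blast
  have "E_equiv k p0 a b \<longleftrightarrow> (\<forall>z. wt k p0 a z = wt k p0 b z)" using K2[OF hk p0 ab(1,2)] .
  also have "\<dots> \<longleftrightarrow> Beq n m a b"
    unfolding wt_def img_d1[OF hk p0 ab(4)] img_d1[OF hk p0 ab(6)] Beq_def
    by (rule wt_generic[OF inj]) (use ab theta_sub in auto)
  finally show ?thesis .
qed

definition dcl :: "box set \<Rightarrow> bool" where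
  "dcl X \<longleftrightarrow> (\<forall>i j. (i,j) \<in> X \<longrightarrow> (i > 1 \<longrightarrow> (i - 1, j) \<in> X) \<and> (j > 1 \<longrightarrow> (i, j - 1) \<in> X))"

definition ucl :: "nat \<Rightarrow> nat \<Rightarrow> box set \<Rightarrow> bool" where
  "ucl n m X \<longleftrightarrow> (\<forall>i j. (i,j) \<in> X \<longrightarrow> (i < n \<longrightarrow> (i + 1, j) \<in> X) \<and> (j < m \<longrightarrow> (i, j + 1) \<in> X))"

lemma rect_eq: "rect n m = {1..n} \<times> {1..m}" by (auto simp: rect_def)
lemma finite_rect: "finite (rect n m)" by (simp add: rect_eq)

lemma part_dcl: "X \<subseteq> rect n m \<Longrightarrow> is_partition X \<longleftrightarrow> dcl X"
  unfolding is_partition_def dcl_def using finite_subset[OF _ finite_rect]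
  by (auto simp: rect_def)

lemma mem_theta: "X \<subseteq> rect n m \<Longrightarrow> y \<in> rect n m \<Longrightarrow> (y \<in> theta n m ` X) = (theta n m y \<in> X)"
  by (metis (no_types, lifting) image_iff subsetD theta_theta theta_rect)

lemma part_ucl: assumes X: "X \<subseteq> rect n m" shows "is_partition (theta n m ` X) \<longleftrightarrow> ucl n m X"
proof
  assume p: "is_partition (theta n m ` X)"
  show "ucl n m X" unfolding ucl_def
  proof (intro allI impI conjI)
    fix i j assume ij: "(i,j) \<in> X"
    then have r: "(i,j) \<in> rect n m" using X by auto
    have t: "theta n m (i,j) \<in> theta n m ` X" using ij by auto
    have tv: "theta n m (i,j) = (n - i + 1, m - j + 1)" by (simp add: theta_def)
    show "(i+1, j) \<in> X" if "i < n"
    proof -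
      have "(n - i, m - j + 1) \<in> theta n m ` X" using p t tv that unfolding is_partition_def
        by (smt (verit, best) Suc_diff_Suc Suc_eq_plus1 add_diff_cancel_right' case_prodD
           less_Suc_eq_le not_less_eq_eq zero_less_diff)
      moreover have "(n - i, m - j + 1) \<in> rect n m" using r that by (auto simp: rect_def)
      moreover have "theta n m (n - i, m - j + 1) = (i + 1, j)" using r that by (auto simp: theta_def rect_def)
      ultimately show ?thesis using mem_theta[OF X] by metis
    qed
    show "(i, j+1) \<in> X" if "j < m"
    proof -
      have "(n - i + 1, m - j) \<in> theta n m ` X" using p t tv that unfolding is_partition_def
        by (smt (verit, best) Suc_diff_Suc Suc_eq_plus1 add_diff_cancel_right' case_prodD
           less_Suc_eq_le not_less_eq_eq zero_less_diff)
      moreover have "(n - i + 1, m - j) \<in> rect n m" using r that by (auto simp: rect_def)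
      moreover have "theta n m (n - i + 1, m - j) = (i, j + 1)" using r that by (auto simp: theta_def rect_def)
      ultimately show ?thesis using mem_theta[OF X] by metis
    qed
  qed
next
  assume u: "ucl n m X"
  have sub: "theta n m ` X \<subseteq> rect n m" using X theta_rect by auto
  show "is_partition (theta n m ` X)" unfolding part_dcl[OF sub] dcl_def
  proof (intro allI impI conjI)
    fix i j assume ij: "(i,j) \<in> theta n m ` X"
    then have r: "(i,j) \<in> rect n m" using sub by auto
    have t: "theta n m (i,j) \<in> X" using mem_theta[OF X r] ij by simp
    have tv: "theta n m (i,j) = (n - i + 1, m - j + 1)" by (simp add: theta_def)
    show "(i - 1, j) \<in> theta n m ` X" if "i > 1"
    proof -
      have "(n - i + 2, m - j + 1) \<in> X" using u t tv that r unfolding ucl_def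
        by (auto simp: rect_def)
      moreover have "(i - 1, j) \<in> rect n m" using r that by (auto simp: rect_def)
      moreover have "theta n m (i - 1, j) = (n - i + 2, m - j + 1)" using r that by (auto simp: theta_def rect_def)
      ultimately show ?thesis using mem_theta[OF X] by metis
    qed
    show "(i, j - 1) \<in> theta n m ` X" if "j > 1"
    proof -
      have "(n - i + 1, m - j + 2) \<in> X" using u t tv that r unfolding ucl_def
        by (auto simp: rect_def)
      moreover have "(i, j - 1) \<in> rect n m" using r that by (auto simp: rect_def)
      moreover have "theta n m (i, j - 1) = (n - i + 1, m - j + 2)" using r that by (auto simp: theta_def rect_def)
      ultimately show ?thesis using mem_theta[OF X] by metis
    qed
  qed
qed

definition valid :: "box set \<Rightarrow> box set \<Rightarrow> bool" where
  "valid Z S \<longleftrightarrow> S \<subseteq> Z \<and> (\<forall>x\<in>S. \<forall>y\<in>Z. box_adj x y \<longrightarrow> y \<in> S)"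

lemma V1:
  assumes L: "L \<subseteq> rect n m" and T: "T \<subseteq> rect n m" and dL: "dcl L" and uT: "ucl n m T"
    and v: "valid (rect n m - ((L - T) \<union> (T - L))) S"
  shows "dcl ((L - T) \<union> S) \<and> ucl n m ((T - L) \<union> S)"
proof -
  let ?Z = "rect n m - ((L - T) \<union> (T - L))"
  have S: "S \<subseteq> ?Z" and cl: "\<And>x y. x \<in> S \<Longrightarrow> y \<in> ?Z \<Longrightarrow> box_adj x y \<Longrightarrow> y \<in> S"
    using v by (auto simp: valid_def)
  have dL': "\<And>i j. (i,j) \<in> L \<Longrightarrow> i > 1 \<Longrightarrow> (i-1,j) \<in> L" "\<And>i j. (i,j) \<in> L \<Longrightarrow> j > 1 \<Longrightarrow> (i,j-1) \<in> L"
    using dL by (auto simp: dcl_def)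
  have uT': "\<And>i j. (i,j) \<in> T \<Longrightarrow> i < n \<Longrightarrow> (i+1,j) \<in> T" "\<And>i j. (i,j) \<in> T \<Longrightarrow> j < m \<Longrightarrow> (i,j+1) \<in> T"
    using uT by (auto simp: ucl_def)
  have d: "dcl ((L - T) \<union> S)" unfolding dcl_def
  proof (intro allI impI conjI)
    fix i j assume ij: "(i,j) \<in> (L - T) \<union> S"
    then have r: "(i,j) \<in> rect n m" using L S by auto
    show "(i-1,j) \<in> (L - T) \<union> S" if "i > 1"
    proof -
      have r': "(i-1,j) \<in> rect n m" using r that by (auto simp: rect_def)
      have adj: "box_adj (i,j) (i-1,j)" using that by (auto simp: box_adj_def)
      have e: "(i - 1) + 1 = i" "i - 1 < n" using that r by (auto simp: rect_def)
      show ?thesis using ij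
      proof
        assume "(i,j) \<in> L - T" then show ?thesis using dL'(1)[of i j] uT'(1)[of "i-1" j] that e by auto
      next
        assume s: "(i,j) \<in> S"
        show ?thesis using cl[OF s _ adj] r' dL'(1)[of i j] uT'(1)[of "i-1" j] that e S s by auto
      qed
    qed
    show "(i,j-1) \<in> (L - T) \<union> S" if "j > 1"
    proof -
      have r': "(i,j-1) \<in> rect n m" using r that by (auto simp: rect_def)
      have adj: "box_adj (i,j) (i,j-1)" using that by (auto simp: box_adj_def)
      have e: "(j - 1) + 1 = j" "j - 1 < m" using that r by (auto simp: rect_def)
      show ?thesis using ij
      proof
        assume "(i,j) \<in> L - T" then show ?thesis using dL'(2)[of i j] uT'(2)[of i "j-1"] that e by auto
      next
        assume s: "(i,j) \<in> S"
        show ?thesis using cl[OF s _ adj] r' dL'(2)[of i j] uT'(2)[of i "j-1"] that e S s by auto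
      qed
    qed
  qed
  have u: "ucl n m ((T - L) \<union> S)" unfolding ucl_def
  proof (intro allI impI conjI)
    fix i j assume ij: "(i,j) \<in> (T - L) \<union> S"
    then have r: "(i,j) \<in> rect n m" using T S by auto
    show "(i+1,j) \<in> (T - L) \<union> S" if "i < n"
    proof -
      have r': "(i+1,j) \<in> rect n m" using r that by (auto simp: rect_def)
      have adj: "box_adj (i,j) (i+1,j)" using that by (auto simp: box_adj_def)
      have e: "(i + 1) - 1 = i" "i + 1 > 1" using that r by (auto simp: rect_def)
      show ?thesis using ij
      proof
        assume "(i,j) \<in> T - L" then show ?thesis using dL'(1)[of "i+1" j] uT'(1)[of i j] that e by auto
      next
        assume s: "(i,j) \<in> S"
        show ?thesis using cl[OF s _ adj] r' dL'(1)[of "i+1" j] uT'(1)[of i j] that e S s by auto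
      qed
    qed
    show "(i,j+1) \<in> (T - L) \<union> S" if "j < m"
    proof -
      have r': "(i,j+1) \<in> rect n m" using r that by (auto simp: rect_def)
      have adj: "box_adj (i,j) (i,j+1)" using that by (auto simp: box_adj_def)
      have e: "(j + 1) - 1 = j" "j + 1 > 1" using that r by (auto simp: rect_def)
      show ?thesis using ij
      proof
        assume "(i,j) \<in> T - L" then show ?thesis using dL'(2)[of i "j+1"] uT'(2)[of i j] that e by auto
      next
        assume s: "(i,j) \<in> S"
        show ?thesis using cl[OF s _ adj] r' dL'(2)[of i "j+1"] uT'(2)[of i j] that e S s by auto
      qed
    qed
  qed
  show ?thesis using d u by simp
qed

lemma V2:
  assumes L: "L \<subseteq> rect n m" and T: "T \<subseteq> rect n m"
    and L': "L' \<subseteq> rect n m" and T': "T' \<subseteq> rect n m" and dL: "dcl L'" and uT: "ucl n m T'"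
    and e1: "L' - T' = L - T" and e2: "T' - L' = T - L"
  shows "valid (rect n m - ((L - T) \<union> (T - L))) (L' \<inter> T') \<and> L' = (L - T) \<union> (L' \<inter> T') \<and> T' = (T - L) \<union> (L' \<inter> T')"
proof -
  have dL': "\<And>i j. (i,j) \<in> L' \<Longrightarrow> i > 1 \<Longrightarrow> (i-1,j) \<in> L'" "\<And>i j. (i,j) \<in> L' \<Longrightarrow> j > 1 \<Longrightarrow> (i,j-1) \<in> L'"
    using dL by (auto simp: dcl_def)
  have uT': "\<And>i j. (i,j) \<in> T' \<Longrightarrow> i < n \<Longrightarrow> (i+1,j) \<in> T'" "\<And>i j. (i,j) \<in> T' \<Longrightarrow> j < m \<Longrightarrow> (i,j+1) \<in> T'"
    using uT by (auto simp: ucl_def)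
  have cl: "y \<in> L' \<inter> T'" if x: "x \<in> L' \<inter> T'" and y: "y \<in> rect n m - ((L - T) \<union> (T - L))" and a: "box_adj x y" for x y
  proof -
    obtain i j where xi: "x = (i,j)" by fastforce
    obtain i' j' where yi: "y = (i',j')" by fastforce
    have ry: "i' \<le> n" "j' \<le> m" "i' \<ge> 1" "j' \<ge> 1" using y yi by (auto simp: rect_def)
    have ny: "y \<notin> L' - T'" "y \<notin> T' - L'" using y e1 e2 by auto
    from a consider "i = i'" "j = j' + 1" | "i = i'" "j' = j + 1" | "j = j'" "i = i' + 1" | "j = j'" "i' = i + 1"
      unfolding box_adj_def xi yi by auto
    then show ?thesis
    proof cases
      case 1 then show ?thesis using dL'(2)[of i j] x ny xi yi ry by auto
    next
      case 2 then show ?thesis using uT'(2)[of i j] x ny xi yi ry by auto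
    next
      case 3 then show ?thesis using dL'(1)[of i j] x ny xi yi ry by auto
    next
      case 4 then show ?thesis using uT'(1)[of i j] x ny xi yi ry by auto
    qed
  qed
  have sb: "L' \<inter> T' \<subseteq> rect n m - ((L - T) \<union> (T - L))" using L' e1 e2 by blast
  have "valid (rect n m - ((L - T) \<union> (T - L))) (L' \<inter> T')" unfolding valid_def
  proof (intro conjI ballI impI)
    show "L' \<inter> T' \<subseteq> rect n m - ((L - T) \<union> (T - L))" by (rule sb)
  next
    fix x y assume "x \<in> L' \<inter> T'" "y \<in> rect n m - ((L - T) \<union> (T - L))" "box_adj x y"
    then show "y \<in> L' \<inter> T'" by (rule cl)
  qed
  moreover have "L' = (L - T) \<union> (L' \<inter> T')" using e1 by blast
  moreover have "T' = (T - L) \<union> (L' \<inter> T')" using e2 by blast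
  ultimately show ?thesis by blast
qed

lemma adj_sym: "box_adj x y \<Longrightarrow> box_adj y x" by (auto simp: box_adj_def)

lemma conn_sym: "connected_in Z x y \<Longrightarrow> connected_in Z y x"
proof -
  have "symp (\<lambda>x y. x \<in> Z \<and> y \<in> Z \<and> box_adj x y)" by (auto intro: sympI adj_sym)
  then have "symp (connected_in Z)" unfolding connected_in_def by (rule symp_rtranclp)
  then show "connected_in Z x y \<Longrightarrow> connected_in Z y x" by (meson sympD)
qed

lemma conn_trans: "connected_in Z x y \<Longrightarrow> connected_in Z y z \<Longrightarrow> connected_in Z x z"
  unfolding connected_in_def by (rule rtranclp_trans)

lemma conn_mem: "connected_in Z x y \<Longrightarrow> x \<in> Z \<Longrightarrow> y \<in> Z"
  unfolding connected_in_def by (induction rule: rtranclp_induct) auto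

lemma valid_conn0: "connected_in Z x y \<Longrightarrow> valid Z S \<Longrightarrow> x \<in> S \<Longrightarrow> y \<in> S"
  unfolding connected_in_def by (induction rule: rtranclp_induct) (auto simp: valid_def)

lemma valid_conn: "valid Z S \<Longrightarrow> x \<in> S \<Longrightarrow> connected_in Z x y \<Longrightarrow> y \<in> S"
  using valid_conn0 by blast

definition comp :: "box set \<Rightarrow> box \<Rightarrow> box set" where
  "comp Z x = {y \<in> Z. connected_in Z x y}"

lemma components_eq: "components Z = comp Z ` Z"
  by (auto simp: components_def comp_def)

lemma comp_self: "x \<in> Z \<Longrightarrow> x \<in> comp Z x"
  by (simp add: comp_def connected_in_def)

lemma comp_valid: "valid Z (comp Z x)"
  unfolding valid_def comp_def connected_in_def
  by (auto intro: rtranclp.rtrancl_into_rtrancl)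

lemma comp_sub: assumes "valid Z S" "comp Z x \<inter> S \<noteq> {}" shows "comp Z x \<subseteq> S"
proof
  fix y' assume y': "y' \<in> comp Z x"
  obtain y where y: "y \<in> comp Z x" "y \<in> S" using assms(2) by auto
  have "connected_in Z y x" using y(1) by (auto simp: comp_def intro: conn_sym)
  moreover have "connected_in Z x y'" using y' by (auto simp: comp_def)
  ultimately have "connected_in Z y y'" by (rule conn_trans)
  then show "y' \<in> S" using valid_conn[OF assms(1) y(2)] by blast
qed

lemma comps_valid: "C \<in> components Z \<Longrightarrow> valid Z C"
  by (auto simp: components_eq comp_valid)

lemma comps_ne: "C \<in> components Z \<Longrightarrow> C \<noteq> {}"
  by (auto simp: components_eq dest: comp_self)

lemma comps_sub: "valid Z S \<Longrightarrow> C \<in> components Z \<Longrightarrow> C \<inter> S \<noteq> {} \<Longrightarrow> C \<subseteq> S"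
  by (auto simp: components_eq dest: comp_sub)

lemma comps_eq: "C \<in> components Z \<Longrightarrow> C' \<in> components Z \<Longrightarrow> C \<inter> C' \<noteq> {} \<Longrightarrow> C = C'"
  by (metis comps_sub comps_valid inf_commute subset_antisym)

lemma comps_subZ: "C \<in> components Z \<Longrightarrow> C \<subseteq> Z"
  using comps_valid valid_def by blast

lemma valid_Union_comps: "valid Z S \<Longrightarrow> S = \<Union>{C \<in> components Z. C \<subseteq> S}"
proof
  assume v: "valid Z S"
  show "S \<subseteq> \<Union>{C \<in> components Z. C \<subseteq> S}"
  proof
    fix x assume x: "x \<in> S"
    then have xZ: "x \<in> Z" using v by (auto simp: valid_def)
    have "comp Z x \<in> components Z" using xZ by (simp add: components_eq)
    moreover have "x \<in> comp Z x" using comp_self[OF xZ] .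
    moreover have "comp Z x \<subseteq> S" using comp_sub[OF v] x \<open>x \<in> comp Z x\<close> by blast
    ultimately show "x \<in> \<Union>{C \<in> components Z. C \<subseteq> S}" by blast
  qed
qed blast

lemma valid_Union: "(\<And>S. S \<in> F \<Longrightarrow> valid Z S) \<Longrightarrow> valid Z (\<Union>F)"
  unfolding valid_def by blast

lemma conn_map:
  assumes "\<And>x y. x \<in> S \<Longrightarrow> y \<in> S \<Longrightarrow> box_adj x y \<Longrightarrow> box_adj (h x) (h y)"
  shows "connected_in S x y \<Longrightarrow> connected_in (h ` S) (h x) (h y)"
  unfolding connected_in_def
proof (induction rule: rtranclp_induct)
  case base then show ?case by simp
next
  case (step y z)
  have "h y \<in> h ` S" "h z \<in> h ` S" "box_adj (h y) (h z)" using step assms by auto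
  then show ?case using step.IH by (rule_tac rtranclp.rtrancl_into_rtrancl) auto
qed

lemma theta_adj: "x \<in> rect n m \<Longrightarrow> y \<in> rect n m \<Longrightarrow> box_adj x y \<Longrightarrow> box_adj (theta n m x) (theta n m y)"
  by (auto simp: box_adj_def theta_def rect_def)

lemma theta_img_img: "S \<subseteq> rect n m \<Longrightarrow> theta n m ` theta n m ` S = S"
  by (auto simp: image_image theta_theta) (metis image_eqI subsetD theta_theta)

lemma comp_theta:
  assumes Z: "Z \<subseteq> rect n m" and x: "x \<in> Z"
  shows "comp (theta n m ` Z) (theta n m x) = theta n m ` comp Z x"
proof
  have adj1: "box_adj (theta n m a) (theta n m b)" if "a \<in> Z" "b \<in> Z" "box_adj a b" for a b
    using that Z by (intro theta_adj) auto
  show "theta n m ` comp Z x \<subseteq> comp (theta n m ` Z) (theta n m x)"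
  proof
    fix v assume "v \<in> theta n m ` comp Z x"
    then obtain y where y: "y \<in> Z" "connected_in Z x y" "v = theta n m y" by (auto simp: comp_def)
    have "connected_in (theta n m ` Z) (theta n m x) (theta n m y)" by (rule conn_map[OF adj1 y(2)])
    then show "v \<in> comp (theta n m ` Z) (theta n m x)" using y by (auto simp: comp_def)
  qed
next
  have Z': "theta n m ` Z \<subseteq> rect n m" using Z theta_sub by blast
  have adj2: "box_adj (theta n m a) (theta n m b)" if "a \<in> theta n m ` Z" "b \<in> theta n m ` Z" "box_adj a b" for a b
    using that Z' by (intro theta_adj) auto
  show "comp (theta n m ` Z) (theta n m x) \<subseteq> theta n m ` comp Z x"
  proof
    fix v assume v: "v \<in> comp (theta n m ` Z) (theta n m x)"
    then obtain y where y: "y \<in> Z" "v = theta n m y" by (auto simp: comp_def)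
    have c: "connected_in (theta n m ` Z) (theta n m x) v" using v by (auto simp: comp_def)
    have c2: "connected_in (theta n m ` theta n m ` Z) (theta n m (theta n m x)) (theta n m v)"
      by (rule conn_map[OF adj2 c])
    have e1: "theta n m ` theta n m ` Z = Z" by (rule theta_img_img[OF Z])
    have e2: "theta n m (theta n m x) = x" using x Z by (intro theta_theta) auto
    have e3: "theta n m v = y" unfolding y(2) using y(1) Z by (intro theta_theta) auto
    have "connected_in Z x y" using c2 unfolding e1 e2 e3 .
    then show "v \<in> theta n m ` comp Z x" using y by (auto simp: comp_def)
  qed
qed

lemma components_theta:
  assumes Z: "Z \<subseteq> rect n m"
  shows "components (theta n m ` Z) = (\<lambda>C. theta n m ` C) ` components Z"
  unfolding components_eq image_image by (rule image_cong[OF refl]) (rule comp_theta[OF Z])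

lemma theta_inj: "inj_on (theta n m) (rect n m)"
  by (metis inj_onI theta_theta)

theorem mainTheorem3:
  fixes k :: complex and n m :: nat and \<alpha> :: bipart
  assumes hk: "k \<notin> \<rat>"
    and hn: "n > 0" and hm: "m > 0"
    and h\<alpha>: "\<alpha> \<in> P_nm n m"
  defines "p0 \<equiv> of_nat n + of_nat m / k"
  defines "E \<equiv> E_class k p0 \<alpha>"
  shows
    "E \<subseteq> P_nm n m \<and>
     (\<exists>\<alpha>m \<in> E. \<exists>\<alpha>M \<in> E.
        (\<forall>\<beta>\<in>E. bip_le \<alpha>m \<beta> \<and> bip_le \<beta> \<alpha>M) \<and>
        (\<forall>\<gamma>\<in>E. (\<gamma> = \<alpha>m \<longleftrightarrow> fst \<gamma> \<inter> theta n m ` snd \<gamma> = {}) \<and>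
                 (\<gamma> = \<alpha>M \<longleftrightarrow> fst \<gamma> \<union> theta n m ` snd \<gamma> = rect n m)) \<and>
        (\<exists>r::nat. \<exists>\<nu> \<tau> :: nat \<Rightarrow> box set.
           components (fst \<alpha>M - fst \<alpha>m) = \<nu> ` {1..r} \<and> inj_on \<nu> {1..r} \<and>
           components (snd \<alpha>M - snd \<alpha>m) = \<tau> ` {1..r} \<and> inj_on \<tau> {1..r} \<and>
           (\<forall>i\<in>{1..r}. \<nu> i \<subseteq> rect n m \<and> \<tau> i \<subseteq> rect n m \<and> theta n m ` \<nu> i = \<tau> i) \<and>
           (\<forall>\<beta>\<in>E. \<exists>!A. A \<subseteq> {1..r} \<and>
                \<beta> = bip_union \<alpha>m (\<Union>(\<nu> ` A), \<Union>(\<tau> ` A))) \<and>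
           (\<forall>A. A \<subseteq> {1..r} \<longrightarrow> bip_union \<alpha>m (\<Union>(\<nu> ` A), \<Union>(\<tau> ` A)) \<in> E) \<and>
           finite E \<and> card E = 2 ^ r))"
proof -
  have p0: "p0 = of_nat n + of_nat m / k" by (simp add: p0_def)
  let ?th = "theta n m"
  let ?R = "rect n m"
  have ab: "is_bipartition \<alpha>" "fst \<alpha> \<subseteq> ?R" "snd \<alpha> \<subseteq> ?R" using h\<alpha> by (auto simp: P_nm_def)
  define L where "L = fst \<alpha>"
  define T where "T = ?th ` snd \<alpha>"
  have LR: "L \<subseteq> ?R" using ab by (simp add: L_def)
  have TR: "T \<subseteq> ?R" using ab theta_sub by (simp add: T_def)
  have thT: "?th ` T = snd \<alpha>" using theta_img_img[OF ab(3)] by (simp add: T_def)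
  have dL: "dcl L" using ab part_dcl[OF LR] by (simp add: L_def is_bipartition_def)
  have uT: "ucl n m T" using ab part_ucl[OF TR] thT by (simp add: is_bipartition_def)
  define Pp where "Pp = L - T"
  define Nn where "Nn = T - L"
  define Z where "Z = ?R - (Pp \<union> Nn)"
  define g where "g S = (Pp \<union> S, ?th ` (Nn \<union> S))" for S
  have PpR: "Pp \<subseteq> ?R" "Nn \<subseteq> ?R" "Z \<subseteq> ?R" using LR TR by (auto simp: Pp_def Nn_def Z_def)
  have Edef: "E = {b. is_bipartition b \<and> E_equiv k p0 \<alpha> b}" by (simp add: E_def E_class_def)
  have vZ: "valid Z S \<Longrightarrow> S \<subseteq> Z" for S by (simp add: valid_def)
  have inE: "g S \<in> E" if v: "valid Z S" for S
  proof -
    have SZ: "S \<subseteq> Z" using vZ[OF v] .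
    have v': "valid (?R - ((L - T) \<union> (T - L))) S" using v by (simp add: Z_def Pp_def Nn_def)
    have du: "dcl (Pp \<union> S) \<and> ucl n m (Nn \<union> S)"
      using V1[OF LR TR dL uT v'] by (simp add: Pp_def Nn_def)
    have s1: "Pp \<union> S \<subseteq> ?R" "Nn \<union> S \<subseteq> ?R" using PpR SZ by auto
    have b1: "is_partition (Pp \<union> S)" using part_dcl[OF s1(1)] du by simp
    have b2: "is_partition (?th ` (Nn \<union> S))" using part_ucl[OF s1(2)] du by simp
    have gP: "g S \<in> P_nm n m" using b1 b2 s1 theta_sub[OF s1(2)]
      by (simp add: g_def P_nm_def is_bipartition_def)
    have tt: "?th ` ?th ` (Nn \<union> S) = Nn \<union> S" by (rule theta_img_img[OF s1(2)])
    have "Beq n m \<alpha> (g S)" unfolding Beq_def g_def fst_conv snd_conv tt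
      using SZ by (auto simp: Z_def Pp_def Nn_def L_def T_def)
    then have "E_equiv k p0 \<alpha> (g S)" using Box[OF hk p0 h\<alpha> gP] by simp
    then show ?thesis using gP by (simp add: Edef P_nm_def)
  qed
  have Eg: "\<exists>S. valid Z S \<and> \<beta> = g S" if b: "\<beta> \<in> E" for \<beta>
  proof -
    have bb: "is_bipartition \<beta>" "E_equiv k p0 \<alpha> \<beta>" using b by (auto simp: Edef)
    have bP: "\<beta> \<in> P_nm n m" by (rule step1[OF hk p0 h\<alpha> bb])
    have bq: "Beq n m \<alpha> \<beta>" using Box[OF hk p0 h\<alpha> bP] bb(2) by simp
    define L' where "L' = fst \<beta>"
    define T' where "T' = ?th ` snd \<beta>"
    have bR: "fst \<beta> \<subseteq> ?R" "snd \<beta> \<subseteq> ?R" using bP by (auto simp: P_nm_def)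
    have L'R: "L' \<subseteq> ?R" using bR by (simp add: L'_def)
    have T'R: "T' \<subseteq> ?R" using bR theta_sub by (simp add: T'_def)
    have thT': "?th ` T' = snd \<beta>" using theta_img_img[OF bR(2)] by (simp add: T'_def)
    have dL': "dcl L'" using bb part_dcl[OF L'R] by (simp add: L'_def is_bipartition_def)
    have uT': "ucl n m T'" using bb part_ucl[OF T'R] thT' by (simp add: is_bipartition_def)
    have e1: "L' - T' = L - T" "T' - L' = T - L" using bq by (auto simp: Beq_def L_def T_def L'_def T'_def)
    have V: "valid (?R - ((L - T) \<union> (T - L))) (L' \<inter> T') \<and> L' = (L - T) \<union> (L' \<inter> T') \<and> T' = (T - L) \<union> (L' \<inter> T')"
      by (rule V2[OF LR TR L'R T'R dL' uT' e1])
    have "\<beta> = (L', ?th ` T')" using thT' by (simp add: L'_def)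
    also have "\<dots> = g (L' \<inter> T')" using V by (simp add: g_def Pp_def Nn_def)
    finally show ?thesis using V by (auto simp: Z_def Pp_def Nn_def)
  qed
  have ginj: "S = S'" if "S \<subseteq> Z" "S' \<subseteq> Z" "g S = g S'" for S S'
  proof -
    have "Pp \<union> S = Pp \<union> S'" using that(3) by (simp add: g_def)
    then show ?thesis using that(1,2) by (auto simp: Z_def)
  qed
  have Esub: "E \<subseteq> P_nm n m"
  proof
    fix b assume "b \<in> E"
    then show "b \<in> P_nm n m" using step1[OF hk p0 h\<alpha>] by (auto simp: Edef)
  qed
  have v0: "valid Z {}" and vZZ: "valid Z Z" by (auto simp: valid_def)
  have finZ: "finite Z" using PpR(3) finite_rect finite_subset by blast
  have finC: "finite (components Z)" using finZ by (simp add: components_eq)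
  define r where "r = card (components Z)"
  obtain \<nu> where bij: "bij_betw \<nu> {1..r} (components Z)"
    using ex_bij_betw_nat_finite_1[OF finC] r_def by blast
  have \<nu>inj: "inj_on \<nu> {1..r}" and \<nu>img: "\<nu> ` {1..r} = components Z"
    using bij by (auto simp: bij_betw_def)
  have \<nu>C: "\<nu> i \<in> components Z" if "i \<in> {1..r}" for i using \<nu>img that by blast
  have \<nu>Z: "\<nu> i \<subseteq> Z" if "i \<in> {1..r}" for i using comps_subZ[OF \<nu>C[OF that]] .
  define \<tau> where "\<tau> i = ?th ` \<nu> i" for i
  define U where "U A = \<Union>(\<nu> ` A)" for A
  have UZ: "A \<subseteq> {1..r} \<Longrightarrow> U A \<subseteq> Z" for A using \<nu>Z unfolding U_def by blast
  have vU: "A \<subseteq> {1..r} \<Longrightarrow> valid Z (U A)" for A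
    unfolding U_def by (rule valid_Union) (use \<nu>C comps_valid in blast)
  have Uinj1: "A \<subseteq> A'" if A: "A \<subseteq> {1..r}" "A' \<subseteq> {1..r}" "U A = U A'" for A A'
  proof
    fix i assume i: "i \<in> A"
    then have ir: "i \<in> {1..r}" using A by auto
    obtain x where x: "x \<in> \<nu> i" using comps_ne[OF \<nu>C[OF ir]] by auto
    then have "x \<in> U A'" using A(3) i by (auto simp: U_def)
    then obtain j where j: "j \<in> A'" "x \<in> \<nu> j" by (auto simp: U_def)
    have jr: "j \<in> {1..r}" using j A by auto
    have "\<nu> i = \<nu> j" using comps_eq[OF \<nu>C[OF ir] \<nu>C[OF jr]] x j by blast
    then have "i = j" using \<nu>inj ir jr by (meson inj_onD)
    then show "i \<in> A'" using j by simp
  qed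
  have Uinj: "A = A'" if "A \<subseteq> {1..r}" "A' \<subseteq> {1..r}" "U A = U A'" for A A'
    using Uinj1[OF that] Uinj1[OF that(2,1) that(3)[symmetric]] by blast
  have Usurj: "\<exists>A \<subseteq> {1..r}. S = U A" if v: "valid Z S" for S
  proof -
    define A where "A = {i \<in> {1..r}. \<nu> i \<subseteq> S}"
    have "\<nu> ` A = {C \<in> components Z. C \<subseteq> S}"
    proof
      show "\<nu> ` A \<subseteq> {C \<in> components Z. C \<subseteq> S}" using \<nu>C by (auto simp: A_def)
      show "{C \<in> components Z. C \<subseteq> S} \<subseteq> \<nu> ` A"
      proof
        fix C assume C: "C \<in> {C \<in> components Z. C \<subseteq> S}"
        then obtain i where "i \<in> {1..r}" "C = \<nu> i" using \<nu>img by (metis (no_types, lifting) imageE mem_Collect_eq)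
        then show "C \<in> \<nu> ` A" using C by (auto simp: A_def)
      qed
    qed
    then have "U A = S" using valid_Union_comps[OF v] by (simp add: U_def)
    moreover have "A \<subseteq> {1..r}" by (auto simp: A_def)
    ultimately show ?thesis by metis
  qed
  have bu: "bip_union (g {}) (\<Union>(\<nu> ` A), \<Union>(\<tau> ` A)) = g (U A)" for A
    by (simp add: bip_union_def g_def U_def \<tau>_def image_Un image_UN)
  have Eimg: "E = (\<lambda>A. g (U A)) ` Pow {1..r}"
  proof
    show "E \<subseteq> (\<lambda>A. g (U A)) ` Pow {1..r}"
    proof
      fix b assume "b \<in> E"
      then obtain S where S: "valid Z S" "b = g S" using Eg by blast
      then obtain A where "A \<subseteq> {1..r}" "S = U A" using Usurj by blast
      then show "b \<in> (\<lambda>A. g (U A)) ` Pow {1..r}" using S by auto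
    qed
  next
    show "(\<lambda>A. g (U A)) ` Pow {1..r} \<subseteq> E" using vU inE by auto
  qed
  have injgU: "inj_on (\<lambda>A. g (U A)) (Pow {1..r})"
    by (rule inj_onI) (use Uinj ginj UZ in auto)
  have finE: "finite E" using Eimg by simp
  have cardE: "card E = 2 ^ r" using Eimg card_image[OF injgU] by (simp add: card_Pow)
  have gS_props: "bip_le (g {}) (g S) \<and> bip_le (g S) (g Z) \<and>
      (g S = g {} \<longleftrightarrow> fst (g S) \<inter> ?th ` snd (g S) = {}) \<and>
      (g S = g Z \<longleftrightarrow> fst (g S) \<union> ?th ` snd (g S) = ?R)" if v: "valid Z S" for S
  proof -
    have SZ: "S \<subseteq> Z" using vZ[OF v] .
    have s1: "Nn \<union> S \<subseteq> ?R" using PpR SZ by auto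
    have tt: "?th ` ?th ` (Nn \<union> S) = Nn \<union> S" by (rule theta_img_img[OF s1])
    have le: "bip_le (g {}) (g S) \<and> bip_le (g S) (g Z)" using SZ by (auto simp: bip_le_def g_def)
    have i1: "fst (g S) \<inter> ?th ` snd (g S) = S" using SZ tt by (auto simp: g_def Z_def Pp_def Nn_def)
    have i2: "fst (g S) \<union> ?th ` snd (g S) = Pp \<union> Nn \<union> S" using tt by (auto simp: g_def)
    have "g S = g {} \<longleftrightarrow> S = {}" using ginj[OF SZ] by auto
    moreover have "g S = g Z \<longleftrightarrow> S = Z" using ginj[OF SZ] by auto
    moreover have "Pp \<union> Nn \<union> S = ?R \<longleftrightarrow> S = Z" using SZ PpR by (auto simp: Z_def)
    ultimately show ?thesis using le i1 i2 by simp
  qed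
  have c1: "components (fst (g Z) - fst (g {})) = \<nu> ` {1..r}"
  proof -
    have "fst (g Z) - fst (g {}) = Z" by (auto simp: g_def Z_def)
    then show ?thesis using \<nu>img by simp
  qed
  have c2: "components (snd (g Z) - snd (g {})) = \<tau> ` {1..r}"
  proof -
    have "snd (g Z) - snd (g {}) = ?th ` ((Nn \<union> Z) - Nn)"
      unfolding g_def snd_conv using PpR
      by (subst inj_on_image_set_diff[OF theta_inj]) auto
    also have "(Nn \<union> Z) - Nn = Z" by (auto simp: Z_def)
    finally have "snd (g Z) - snd (g {}) = ?th ` Z" .
    then show ?thesis using components_theta[OF PpR(3)] \<nu>img
      by (simp add: \<tau>_def image_image) (metis image_image)
  qed
  have \<tau>inj: "inj_on \<tau> {1..r}"
  proof (rule inj_onI)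
    fix i j assume ij: "i \<in> {1..r}" "j \<in> {1..r}" "\<tau> i = \<tau> j"
    have "\<nu> i = ?th ` \<tau> i" using theta_img_img \<nu>Z[OF ij(1)] PpR(3) by (simp add: \<tau>_def)
    also have "\<dots> = ?th ` \<tau> j" using ij by simp
    also have "\<dots> = \<nu> j" using theta_img_img \<nu>Z[OF ij(2)] PpR(3) by (simp add: \<tau>_def)
    finally show "i = j" using \<nu>inj ij by (meson inj_onD)
  qed
  have rects: "\<forall>i\<in>{1..r}. \<nu> i \<subseteq> ?R \<and> \<tau> i \<subseteq> ?R \<and> ?th ` \<nu> i = \<tau> i"
  proof (intro ballI conjI)
    fix i assume i: "i \<in> {1..r}"
    show "\<nu> i \<subseteq> ?R" using \<nu>Z[OF i] PpR(3) by blast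
    then show "\<tau> i \<subseteq> ?R" unfolding \<tau>_def by (rule theta_sub)
    show "?th ` \<nu> i = \<tau> i" by (simp add: \<tau>_def)
  qed
  have uniq: "\<forall>\<beta>\<in>E. \<exists>!A. A \<subseteq> {1..r} \<and> \<beta> = bip_union (g {}) (\<Union>(\<nu> ` A), \<Union>(\<tau> ` A))"
  proof
    fix b assume "b \<in> E"
    then obtain A where A: "A \<subseteq> {1..r}" "b = g (U A)" using Eimg by auto
    show "\<exists>!A. A \<subseteq> {1..r} \<and> b = bip_union (g {}) (\<Union>(\<nu> ` A), \<Union>(\<tau> ` A))"
    proof (rule ex1I[of _ A])
      show "A \<subseteq> {1..r} \<and> b = bip_union (g {}) (\<Union>(\<nu> ` A), \<Union>(\<tau> ` A))" using A bu by simp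
    next
      fix A' assume "A' \<subseteq> {1..r} \<and> b = bip_union (g {}) (\<Union>(\<nu> ` A'), \<Union>(\<tau> ` A'))"
      then have A': "A' \<subseteq> {1..r}" "g (U A') = g (U A)" using A bu by auto
      then show "A' = A" using Uinj[OF A'(1) A(1)] ginj[OF UZ[OF A'(1)] UZ[OF A(1)]] by blast
    qed
  qed
  have allin: "\<forall>A. A \<subseteq> {1..r} \<longrightarrow> bip_union (g {}) (\<Union>(\<nu> ` A), \<Union>(\<tau> ` A)) \<in> E"
    using bu inE vU by simp
  have mainpart: "(\<forall>\<beta>\<in>E. bip_le (g {}) \<beta> \<and> bip_le \<beta> (g Z)) \<and>
        (\<forall>\<gamma>\<in>E. (\<gamma> = g {} \<longleftrightarrow> fst \<gamma> \<inter> ?th ` snd \<gamma> = {}) \<and>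
                 (\<gamma> = g Z \<longleftrightarrow> fst \<gamma> \<union> ?th ` snd \<gamma> = ?R))"
  proof (intro conjI ballI)
    fix b assume "b \<in> E"
    then obtain S where S: "valid Z S" "b = g S" using Eg by blast
    show "bip_le (g {}) b" "bip_le b (g Z)" using gS_props[OF S(1)] S(2) by simp_all
  next
    fix b assume "b \<in> E"
    then obtain S where S: "valid Z S" "b = g S" using Eg by blast
    show "(b = g {} \<longleftrightarrow> fst b \<inter> ?th ` snd b = {})" "(b = g Z \<longleftrightarrow> fst b \<union> ?th ` snd b = ?R)"
      using gS_props[OF S(1)] S(2) by simp_all
  qed
  have ex: "\<exists>r::nat. \<exists>\<nu> \<tau> :: nat \<Rightarrow> box set.
           components (fst (g Z) - fst (g {})) = \<nu> ` {1..r} \<and> inj_on \<nu> {1..r} \<and>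
           components (snd (g Z) - snd (g {})) = \<tau> ` {1..r} \<and> inj_on \<tau> {1..r} \<and>
           (\<forall>i\<in>{1..r}. \<nu> i \<subseteq> rect n m \<and> \<tau> i \<subseteq> rect n m \<and> theta n m ` \<nu> i = \<tau> i) \<and>
           (\<forall>\<beta>\<in>E. \<exists>!A. A \<subseteq> {1..r} \<and>
                \<beta> = bip_union (g {}) (\<Union>(\<nu> ` A), \<Union>(\<tau> ` A))) \<and>
           (\<forall>A. A \<subseteq> {1..r} \<longrightarrow> bip_union (g {}) (\<Union>(\<nu> ` A), \<Union>(\<tau> ` A)) \<in> E) \<and>
           finite E \<and> card E = 2 ^ r"
    apply (rule exI[of _ r], rule exI[of _ \<nu>], rule exI[of _ \<tau>])
    apply (intro conjI)
    by (fact c1 \<nu>inj c2 \<tau>inj rects uniq allin finE cardE)+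
  have inE2: "g {} \<in> E" "g Z \<in> E" using inE v0 vZZ by auto
  show ?thesis
    apply (rule conjI[OF Esub])
    apply (rule bexI[OF _ inE2(1)], rule bexI[OF _ inE2(2)])
    by (rule conjI[OF conjunct1[OF mainpart] conjI[OF conjunct2[OF mainpart] ex]])
qed

end
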